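(* Let $f\in\mathcal{B}$ satisfy $\|f-f_0\|_{\mathcal{B}}<10$, where $f_0=10\cosh-12$. Then $f$ is transcendental and $f\colon\mathbb{R}\to\mathbb{R}$ is convex.
   Context: $\mathcal{B}$ is the real Banach space of real and even entire maps $f$ (i.e. $f(\bar z)=\overline{f(z)}$, $f(-z)=f(z)$) such that the sequence $(f^{(j)}(0))_{j\ge0}$ is bounded, with norm $\|f\|_{\mathcal{B}}=\sup_{j\ge0}|f^{(j)}(0)|$. $f_0\in\mathcal{B}$ is the map $z\mapsto 10\cosh(z)-12$. *)

theory Defs
  imports "HOL-Complex_Analysis.Complex_Analysis"
begin

text \<open>The real Banach space B: real, even entire maps whose sequence of
derivatives at 0 is bounded.\<close>
definition inB :: "(complex \<Rightarrow> complex) \<Rightarrow> bool" where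
  "inB f \<longleftrightarrow> f holomorphic_on UNIV
     \<and> (\<forall>z. f (cnj z) = cnj (f z))
     \<and> (\<forall>z. f (- z) = f z)
     \<and> bounded (range (\<lambda>j. (deriv ^^ j) f 0))"

definition normB :: "(complex \<Rightarrow> complex) \<Rightarrow> real" where
  "normB f = (SUP j. cmod ((deriv ^^ j) f 0))"

definition f0 :: "complex \<Rightarrow> complex" where
  "f0 z = 10 * cosh z - 12"

definition transcendental_entire :: "(complex \<Rightarrow> complex) \<Rightarrow> bool" where
  "transcendental_entire f \<longleftrightarrow> \<not> (\<exists>p. \<forall>z. f z = poly p z)"

end

theory Submission imports Defs begin
lemma f0_derivs: "(deriv ^^ n) f0 = (\<lambda>z. if n = 0 then 10 * cosh z - 12 else if even n then 10 * cosh z else 10 * sinh z)"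
proof (induction n)
  case 0 then show ?case by (simp add: f0_def fun_eq_iff)
next
  case (Suc n)
  show ?case
  proof (rule ext)
    fix z :: complex
    have "((\<lambda>z. if n = 0 then 10 * cosh z - 12 else if even n then 10 * cosh z else 10 * sinh z) has_field_derivative
          (if Suc n = 0 then 10 * cosh z - 12 else if even (Suc n) then 10 * cosh z else 10 * sinh z)) (at z)"
      by (cases "n = 0"; cases "even n"; auto intro!: derivative_eq_intros)
    then show "(deriv ^^ Suc n) f0 z = (if Suc n = 0 then 10 * cosh z - 12 else if even (Suc n) then 10 * cosh z else 10 * sinh z)"
      using Suc by (simp add: DERIV_imp_deriv)
  qed
qed
lemma f0d0: "(deriv ^^ n) f0 0 = (if n = 0 then -2 else if even n then 10 else 0)"
  by (simp add: f0_derivs)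
lemma pd: "degree (p::complex poly) < n \<Longrightarrow> (pderiv ^^ n) p = 0"
proof (induction n arbitrary: p)
  case 0 then show ?case by simp
next
  case (Suc n)
  have z: "(pderiv ^^ m) 0 = 0" for m :: nat
    by (induction m) auto
  show ?case
  proof (cases "degree p = 0")
    case True
    then have "pderiv p = 0" by (simp add: pderiv_eq_0_iff)
    then show ?thesis by (simp add: funpow_Suc_right z del: funpow.simps)
  next
    case False
    then have "degree (pderiv p) < n" using Suc.prems by (simp add: degree_pderiv)
    then show ?thesis using Suc.IH by (simp add: funpow_Suc_right del: funpow.simps)
  qed
qed
lemma dp: "(deriv ^^ n) (poly p) = poly ((pderiv ^^ n) (p::complex poly))"
proof (induction n)
  case (Suc n)
  have "(deriv ^^ Suc n) (poly p) = deriv (poly ((pderiv^^n) p))" using Suc by simp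
  also have "\<dots> = poly (pderiv ((pderiv^^n) p))" by (rule ext, rule DERIV_imp_deriv[OF poly_DERIV])
  finally show ?case by simp
qed simp

lemma Re_term: "Re (a / fact n * complex_of_real x ^ n) = Re a / fact n * x ^ n"
proof -
  have "a / fact n * complex_of_real x ^ n = ((x ^ n) *\<^sub>R a) / complex_of_real (fact n)"
    by (simp add: field_simps scaleR_conv_of_real)
  then show ?thesis by (simp only: Re_divide_of_real) simp
qed

lemma lim_convex:
  fixes e :: "nat \<Rightarrow> real \<Rightarrow> real"
  assumes conv: "\<And>n. convex_on UNIV (e n)"
    and sums: "\<And>x. (\<lambda>n. e n x) sums F x"
  shows "convex_on UNIV F"
proof -
  have ps: "convex_on UNIV (\<lambda>x. \<Sum>n<N. e n x)" for N
  proof (induction N)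
    case 0 then show ?case by (simp add: convex_on_const)
  next
    case (Suc N) then show ?case using conv[of N] by (simp add: convex_on_add)
  qed
  show ?thesis
  proof (rule convex_onI)
    fix t x y :: real assume t: "0 < t" "t < 1"
    let ?z = "(1 - t) *\<^sub>R x + t *\<^sub>R y"
    have l1: "(\<lambda>N. \<Sum>n<N. e n ?z) \<longlonglongrightarrow> F ?z" using sums[of ?z] by (simp add: sums_def)
    have l2: "(\<lambda>N. (1 - t) * (\<Sum>n<N. e n x) + t * (\<Sum>n<N. e n y)) \<longlonglongrightarrow> (1 - t) * F x + t * F y"
      using sums[of x] sums[of y] unfolding sums_def by (intro tendsto_intros)
    show "F ?z \<le> (1 - t) * F x + t * F y"
    proof (rule LIMSEQ_le[OF l1 l2])
      show "\<exists>N0. \<forall>N\<ge>N0. (\<Sum>n<N. e n ?z) \<le> (1 - t) * (\<Sum>n<N. e n x) + t * (\<Sum>n<N. e n y)"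
        using convex_onD[OF ps, of t x y] t by auto
    qed
  qed simp
qed

theorem lemma4p1:
  fixes f :: "complex \<Rightarrow> complex"
  assumes "inB f"
    and "normB (\<lambda>z. f z - f0 z) < 10"
  shows "transcendental_entire f \<and> convex_on UNIV (\<lambda>x::real. Re (f (complex_of_real x)))"
proof -
  define c where "c n = (deriv ^^ n) f 0" for n
  have holf: "f holomorphic_on UNIV" and ev: "\<And>z. f (- z) = f z"
    and bf: "bounded (range c)"
    using assms(1) by (auto simp: inB_def c_def)
  have hol0: "f0 holomorphic_on UNIV"
    unfolding f0_def by (intro analytic_imp_holomorphic analytic_intros)
  let ?g = "\<lambda>z. f z - f0 z"
  have gd: "(deriv ^^ n) ?g 0 = c n - (if n = 0 then -2 else if even n then 10 else 0)" for n
    using higher_deriv_diff[OF holf hol0, of 0 n] by (simp add: c_def f0d0)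
  obtain B where B: "\<And>j. cmod (c j) \<le> B" using bf by (auto simp: bounded_iff)
  have gB: "cmod ((deriv ^^ j) ?g 0) \<le> B + 12" for j
  proof -
    have "cmod ((deriv ^^ j) ?g 0) \<le> cmod (c j) + cmod (if j = 0 then -2 else if even j then 10 else 0 :: complex)"
      unfolding gd by (rule norm_triangle_ineq4)
    also have "\<dots> \<le> B + 12" using B[of j] by auto
    finally show ?thesis .
  qed
  have bdd: "bdd_above (range (\<lambda>j. cmod ((deriv ^^ j) ?g 0)))" by (intro bdd_aboveI2[where M="B+12"] gB)
  have key: "cmod ((deriv ^^ j) ?g 0) < 10" for j
    using cSUP_upper[OF _ bdd, of j] assms(2) by (simp add: normB_def)
  have key2: "cmod (c n - 10) < 10" if "even n" "n \<noteq> 0" for n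
    using key[of n] that gd[of n] by simp
  have trans: "transcendental_entire f"
    unfolding transcendental_entire_def
  proof
    assume "\<exists>p. \<forall>z. f z = poly p z"
    then obtain p where "\<forall>z. f z = poly p z" by blast
    then have fp: "f = poly p" by auto
    let ?n = "2 * degree p + 2"
    have z: "(pderiv ^^ ?n) p = 0" by (rule pd) simp
    have "c ?n = 0" unfolding c_def fp dp z by simp
    with key2[of ?n] show False by simp
  qed
  define b where "b n = Re (c n) / fact n" for n
  define e where "e n x = b n * (x ^ n + (- x) ^ n) / 2" for n and x :: real
  have ser: "(\<lambda>n. b n * x ^ n) sums Re (f (complex_of_real x))" for x
  proof -
    have "(\<lambda>n. c n / fact n * (complex_of_real x - 0) ^ n) sums f (complex_of_real x)"
      unfolding c_def
      by (rule holomorphic_power_series[of f 0 "norm (complex_of_real x) + 1"])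
         (auto intro: holomorphic_on_subset[OF holf])
    from sums_Re[OF this] show ?thesis by (simp only: diff_zero Re_term b_def)
  qed
  have sers: "(\<lambda>n. e n x) sums Re (f (complex_of_real x))" for x
  proof -
    have "Re (f (complex_of_real (- x))) = Re (f (complex_of_real x))"
      using ev[of "complex_of_real x"] by simp
    then have "(\<lambda>n. b n * (- x) ^ n) sums Re (f (complex_of_real x))" using ser[of "- x"] by simp
    from sums_divide[OF sums_add[OF ser[of x] this], of 2] show ?thesis
      by (simp add: e_def algebra_simps)
  qed
  have conv: "convex_on UNIV (e n)" for n
  proof (cases "even n")
    case False
    then have "e n = (\<lambda>x. 0)" by (auto simp: e_def fun_eq_iff)
    then show ?thesis by (simp add: convex_on_const)
  next
    case True
    then have en: "e n = (\<lambda>x. b n * x ^ n)" by (auto simp: e_def fun_eq_iff)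
    show ?thesis
    proof (cases "n = 0")
      case True then show ?thesis unfolding en by (simp add: convex_on_const)
    next
      case False
      have "\<bar>Re (c n - 10)\<bar> \<le> cmod (c n - 10)" by (rule abs_Re_le_cmod)
      with key2[OF True False] have "Re (c n) > 0" by simp
      then have "b n \<ge> 0" by (simp add: b_def)
      then show ?thesis unfolding en by (intro convex_on_cmul convex_power_even True)
    qed
  qed
  have "convex_on UNIV (\<lambda>x::real. Re (f (complex_of_real x)))"
    by (rule lim_convex[OF conv sers])
  with trans show ?thesis by simp
qed
end
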